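(* For every strategy profile $s$ with $S_0(s)\vee S_1(s)$: $\ \mathsf{SAcBes}(s)\vee\mathsf{SBcAes}(s)\iff\mathsf{SPE}(s)$.
   Context: Let $P=\{A,B\}$ and $\mathrm{Choice}=\{d,r\}$; a payoff function is $f:P\to\mathbb{R}$. Strategy profiles are elements of the final coalgebra of $X\mapsto\mathbb{R}^P+P\times\mathrm{Choice}\times X\times X$ (finite or infinite trees $\langle f\rangle$ or $\langle p,c,s_d,s_r\rangle$, equality being bisimilarity). The payoff $\widehat{s}$ is the partial function given by $\widehat{\langle f\rangle}=f$, $\widehat{\langle p,d,s_d,s_r\rangle}=\widehat{s_d}$, $\widehat{\langle p,r,s_d,s_r\rangle}=\widehat{s_r}$. Convergence $\downarrow$: least predicate with $\downarrow(s)$ iff $s=\langle f\rangle$, or $s=\langle p,d,s_d,s_r\rangle\wedge\downarrow(s_d)$, or $s=\langle p,r,s_d,s_r\rangle\wedge\downarrow(s_r)$. Strong convergence $\Downarrow$: greatest predicate with $\Downarrow(s)$ iff $s=\langle f\rangle$, or $s=\langle p,c,s_d,s_r\rangle$ with $\downarrow(s),\Downarrow(s_d),\Downarrow(s_r)$. For a predicate $\Phi$, $\Box\Phi$ is the greatest predicate such that $\Box\Phi(s)$ iff $\Phi(s)$ and, whenever $s=\langle p,c,s_d,s_r\rangle$, $\Box\Phi(s_d)$ and $\Box\Phi(s_r)$. $\mathsf{PE}(s)$ holds iff $\Downarrow(s)$ and (if $s=\langle p,d,s_d,s_r\rangle$ then $\widehat{s_d}(p)\ge\widehat{s_r}(p)$)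 and (if $s=\langle p,r,s_d,s_r\rangle$ then $\widehat{s_r}(p)\ge\widehat{s_d}(p)$); $\mathsf{SPE}=\Box\,\mathsf{PE}$. Let $f_{0,1}=(A\mapsto0,B\mapsto1)$, $f_{1,0}=(A\mapsto1,B\mapsto0)$. $S_0,S_1$ are the greatest predicates with $S_0(s)$ iff $s=\langle A,c,\langle f_{0,1}\rangle,s'\rangle$ with $S_1(s')$, and $S_1(s)$ iff $s=\langle B,c,\langle f_{1,0}\rangle,s'\rangle$ with $S_0(s')$ (these are the profiles of the infinite alternating "$0,1$-game"). $\mathsf{AcBes}$ is the least predicate such that $\mathsf{AcBes}(s)$ holds iff: whenever $s=\langle p,c,\langle f\rangle,s'\rangle$, then ($p=A$, $f=f_{0,1}$, $c=r$, $\mathsf{AcBes}(s')$) or ($p=B$, $f=f_{1,0}$, and ($c=d$ or $\mathsf{AcBes}(s')$)). $\mathsf{BcAes}$ is the least predicate such that $\mathsf{BcAes}(s)$ holds iff: whenever $s=\langle p,c,\langle f\rangle,s'\rangle$, then ($p=B$, $f=f_{1,0}$, $c=r$, $\mathsf{BcAes}(s')$) or ($p=A$, $f=f_{0,1}$, and ($c=d$ or $\mathsf{BcAes}(s')$)). $\mathsf{SAcBes}=\Box\,\mathsf{AcBes}$, $\mathsf{SBcAes}=\Box\,\mathsf{BcAes}$. *)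

theory Defs
  imports Main "HOL.Real"
begin

datatype P = A | B
datatype Choice = d | r

text \<open>Strategy profiles: final coalgebra of X = (P => real) + P * Choice * X * X;
  equality of codatatype values is bisimilarity.\<close>
codatatype strat = Leaf "P \<Rightarrow> real" | Node P Choice strat strat

partial_function (option) payoff :: "strat \<Rightarrow> (P \<Rightarrow> real) option" where
  "payoff s = (case s of Leaf f \<Rightarrow> Some f
     | Node p c sd sr \<Rightarrow> (if c = d then payoff sd else payoff sr))"

inductive conv :: "strat \<Rightarrow> bool" where
  conv_leaf: "conv (Leaf f)"
| conv_d: "conv sd \<Longrightarrow> conv (Node p d sd sr)"
| conv_r: "conv sr \<Longrightarrow> conv (Node p r sd sr)"

coinductive sconv :: "strat \<Rightarrow> bool" where
  sconv_leaf: "sconv (Leaf f)"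
| sconv_node: "conv (Node p c sd sr) \<Longrightarrow> sconv sd \<Longrightarrow> sconv sr \<Longrightarrow> sconv (Node p c sd sr)"

coinductive always :: "(strat \<Rightarrow> bool) \<Rightarrow> strat \<Rightarrow> bool" for \<Phi> where
  always_leaf: "\<Phi> (Leaf f) \<Longrightarrow> always \<Phi> (Leaf f)"
| always_node: "\<Phi> (Node p c sd sr) \<Longrightarrow> always \<Phi> sd \<Longrightarrow> always \<Phi> sr \<Longrightarrow> always \<Phi> (Node p c sd sr)"

definition PE :: "strat \<Rightarrow> bool" where
  "PE s \<longleftrightarrow> sconv s
     \<and> (\<forall>p sd sr. s = Node p d sd sr \<longrightarrow> the (payoff sd) p \<ge> the (payoff sr) p)
     \<and> (\<forall>p sd sr. s = Node p r sd sr \<longrightarrow> the (payoff sr) p \<ge> the (payoff sd) p)"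

definition SPE :: "strat \<Rightarrow> bool" where
  "SPE = always PE"

definition f01 :: "P \<Rightarrow> real" where "f01 = (\<lambda>x. case x of A \<Rightarrow> 0 | B \<Rightarrow> 1)"
definition f10 :: "P \<Rightarrow> real" where "f10 = (\<lambda>x. case x of A \<Rightarrow> 1 | B \<Rightarrow> 0)"

coinductive S0 :: "strat \<Rightarrow> bool" and S1 :: "strat \<Rightarrow> bool" where
  S0I: "S1 s' \<Longrightarrow> S0 (Node A c (Leaf f01) s')"
| S1I: "S0 s' \<Longrightarrow> S1 (Node B c (Leaf f10) s')"

inductive AcBes :: "strat \<Rightarrow> bool" where
  AcBes_other: "(\<nexists>p c f s'. s = Node p c (Leaf f) s') \<Longrightarrow> AcBes s"
| AcBes_A: "AcBes s' \<Longrightarrow> AcBes (Node A r (Leaf f01) s')"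
| AcBes_Bd: "AcBes (Node B d (Leaf f10) s')"
| AcBes_B: "AcBes s' \<Longrightarrow> AcBes (Node B c (Leaf f10) s')"

inductive BcAes :: "strat \<Rightarrow> bool" where
  BcAes_other: "(\<nexists>p c f s'. s = Node p c (Leaf f) s') \<Longrightarrow> BcAes s"
| BcAes_B: "BcAes s' \<Longrightarrow> BcAes (Node B r (Leaf f10) s')"
| BcAes_Ad: "BcAes (Node A d (Leaf f01) s')"
| BcAes_A: "BcAes s' \<Longrightarrow> BcAes (Node A c (Leaf f01) s')"

definition SAcBes :: "strat \<Rightarrow> bool" where "SAcBes = always AcBes"
definition SBcAes :: "strat \<Rightarrow> bool" where "SBcAes = always BcAes"

end

theory Submission
  imports Defs
begin

lemma pay_leaf[simp]: "payoff (Leaf f) = Some f"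
  by (subst payoff.simps) simp

lemma pay_node[simp]: "payoff (Node p c sd sr) = (if c = d then payoff sd else payoff sr)"
  by (subst payoff.simps) simp

lemma f_vals[simp]: "f01 A = 0" "f01 B = 1" "f10 A = 1" "f10 B = 0" "f01 \<noteq> f10" "f10 \<noteq> f01"
  by (auto simp: f01_def f10_def fun_eq_iff intro: exI[of _ A])

lemma c_cases: "c \<noteq> d \<longleftrightarrow> c = r" by (cases c) auto

definition G where "G s \<longleftrightarrow> S0 s \<or> S1 s"

lemma G_cases:
  assumes "G s"
  shows "(\<exists>c s'. s = Node A c (Leaf f01) s' \<and> G s') \<or> (\<exists>c s'. s = Node B c (Leaf f10) s' \<and> G s')"
  using assms unfolding G_def by (auto elim: S0.cases S1.cases)

lemma G_node: "G (Node p c sd sr) \<Longrightarrow> G sr \<and> ((p = A \<and> sd = Leaf f01) \<or> (p = B \<and> sd = Leaf f10))"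
  by (drule G_cases) auto

lemma G_obt: "G s \<Longrightarrow> \<exists>p c f s'. s = Node p c (Leaf f) s' \<and> G s'"
  using G_cases[of s] by blast

lemma G_leaf: "\<not> G (Leaf f)"
  using G_cases[of "Leaf f"] by auto

lemma AcBes_pay: "AcBes s \<Longrightarrow> G s \<Longrightarrow> conv s \<and> payoff s = Some f10"
proof (induction rule: AcBes.induct)
  case (AcBes_other s) then show ?case using G_obt[of s] by blast
next
  case (AcBes_A s') then show ?case by (auto intro: conv.intros dest: G_node)
next
  case (AcBes_Bd s') then show ?case by (auto intro: conv.intros)
next
  case (AcBes_B s' c) then show ?case by (cases c) (auto intro: conv.intros dest: G_node)
qed

lemma BcAes_pay: "BcAes s \<Longrightarrow> G s \<Longrightarrow> conv s \<and> payoff s = Some f01"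
proof (induction rule: BcAes.induct)
  case (BcAes_other s) then show ?case using G_obt[of s] by blast
next
  case (BcAes_B s') then show ?case by (auto intro: conv.intros dest: G_node)
next
  case (BcAes_Ad s') then show ?case by (auto intro: conv.intros)
next
  case (BcAes_A s' c) then show ?case by (cases c) (auto intro: conv.intros dest: G_node)
qed

lemma always_inv: "always \<Phi> (Node p c sd sr) \<Longrightarrow> \<Phi> (Node p c sd sr) \<and> always \<Phi> sd \<and> always \<Phi> sr"
  by (erule always.cases) auto

lemma always_self: "always \<Phi> s \<Longrightarrow> \<Phi> s"
  by (erule always.cases) auto

lemma leaf_always[simp]: "always PE (Leaf f)" "always AcBes (Leaf f)" "always BcAes (Leaf f)"
  by (auto intro!: always_leaf AcBes_other BcAes_other simp: PE_def sconv_leaf)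

lemma sconv_from:
  assumes "G s" "always Q s" "\<And>s. G s \<Longrightarrow> Q s \<Longrightarrow> conv s"
  shows "sconv s"
  using assms(1,2)
proof (coinduction arbitrary: s rule: sconv.coinduct)
  case (sconv s)
  then obtain p c f s' where s: "s = Node p c (Leaf f) s'" "G s'"
    using G_obt by blast
  with sconv show ?case using always_inv[of Q p c "Leaf f" s'] assms(3)[of s]
    by (auto intro: sconv_leaf)
qed

lemma A_to_SPE: "G s \<Longrightarrow> SAcBes s \<Longrightarrow> SPE s"
  unfolding SPE_def SAcBes_def
proof (coinduction arbitrary: s rule: always.coinduct)
  case (always s)
  then obtain p c f s' where s: "s = Node p c (Leaf f) s'" "G s'"
    using G_obt by blast
  from always s have inv: "AcBes s" "always AcBes s'"
    using always_inv[of AcBes p c "Leaf f" s'] by auto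
  have sc: "sconv s"
    using always(1,2) by (rule sconv_from) (use AcBes_pay always_self in blast)
  have ps': "payoff s' = Some f10" using AcBes_pay[OF always_self[OF inv(2)] s(2)] by simp
  have pe: "PE s"
  proof -
    from always(1) s have "(p = A \<and> f = f01) \<or> (p = B \<and> f = f10)" by (auto dest: G_node)
    then show ?thesis
    proof
      assume pa: "p = A \<and> f = f01"
      have "c = r" using inv(1) s pa by (cases rule: AcBes.cases) auto
      then show ?thesis using sc s pa ps' by (auto simp: PE_def)
    next
      assume pb: "p = B \<and> f = f10"
      then show ?thesis using sc s ps' by (cases c) (auto simp: PE_def)
    qed
  qed
  show ?case using s pe inv by (auto intro: always_leaf AcBes_other)
qed

lemma B_to_SPE: "G s \<Longrightarrow> SBcAes s \<Longrightarrow> SPE s"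
  unfolding SPE_def SBcAes_def
proof (coinduction arbitrary: s rule: always.coinduct)
  case (always s)
  then obtain p c f s' where s: "s = Node p c (Leaf f) s'" "G s'"
    using G_obt by blast
  from always s have inv: "BcAes s" "always BcAes s'"
    using always_inv[of BcAes p c "Leaf f" s'] by auto
  have sc: "sconv s"
    using always(1,2) by (rule sconv_from) (use BcAes_pay always_self in blast)
  have ps': "payoff s' = Some f01" using BcAes_pay[OF always_self[OF inv(2)] s(2)] by simp
  have pe: "PE s"
  proof -
    from always(1) s have "(p = A \<and> f = f01) \<or> (p = B \<and> f = f10)" by (auto dest: G_node)
    then show ?thesis
    proof
      assume pb: "p = B \<and> f = f10"
      have "c = r" using inv(1) s pb by (cases rule: BcAes.cases) auto
      then show ?thesis using sc s pb ps' by (auto simp: PE_def)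
    next
      assume pa: "p = A \<and> f = f01"
      then show ?thesis using sc s ps' by (cases c) (auto simp: PE_def)
    qed
  qed
  show ?case using s pe inv by (auto intro: always_leaf BcAes_other)
qed

lemma conv_pay: "conv s \<Longrightarrow> G s \<Longrightarrow> payoff s = Some f01 \<or> payoff s = Some f10"
  by (induction rule: conv.induct) (auto simp: G_leaf dest: G_node)

lemma sconv_conv: "sconv s \<Longrightarrow> conv s"
  by (erule sconv.cases) (auto intro: conv.intros)

lemma AcBes_of: "conv s \<Longrightarrow> G s \<Longrightarrow> payoff s = Some f10 \<Longrightarrow> AcBes s"
proof (induction rule: conv.induct)
  case (conv_leaf f) then show ?case by (simp add: G_leaf)
next
  case (conv_d sd p sr) then show ?case using G_node[of p d sd sr] by (auto intro: AcBes.intros)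
next
  case (conv_r sr p sd) then show ?case using G_node[of p r sd sr] by (auto intro: AcBes.intros)
qed

lemma BcAes_of: "conv s \<Longrightarrow> G s \<Longrightarrow> payoff s = Some f01 \<Longrightarrow> BcAes s"
proof (induction rule: conv.induct)
  case (conv_leaf f) then show ?case by (simp add: G_leaf)
next
  case (conv_d sd p sr) then show ?case using G_node[of p d sd sr] by (auto intro: BcAes.intros)
next
  case (conv_r sr p sd) then show ?case using G_node[of p r sd sr] by (auto intro: BcAes.intros)
qed

lemma SPE_conv: "SPE s \<Longrightarrow> conv s"
  unfolding SPE_def by (drule always_self) (auto simp: PE_def intro: sconv_conv)

lemma SPE_A: "G s \<Longrightarrow> SPE s \<Longrightarrow> payoff s = Some f10 \<Longrightarrow> SAcBes s"
  unfolding SAcBes_def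
proof (coinduction arbitrary: s rule: always.coinduct)
  case (always s)
  then obtain p c f s' where s: "s = Node p c (Leaf f) s'" "G s'"
    using G_obt by blast
  have ab: "AcBes s" using AcBes_of[OF SPE_conv] always by blast
  have sp: "SPE s'" "PE s" using always(2) s unfolding SPE_def
    using always_inv[of PE p c "Leaf f" s'] by auto
  have ps': "payoff s' = Some f10"
  proof -
    from always(1) s have "(p = A \<and> f = f01) \<or> (p = B \<and> f = f10)" by (auto dest: G_node)
    moreover have "payoff s' = Some f01 \<or> payoff s' = Some f10"
      using conv_pay[OF SPE_conv[OF sp(1)] s(2)] .
    ultimately show ?thesis using always(3) s sp(2)
      by (cases c) (auto simp: PE_def)
  qed
  show ?case using s ab sp ps' by (auto intro: always_leaf AcBes_other)
qed

lemma SPE_B: "G s \<Longrightarrow> SPE s \<Longrightarrow> payoff s = Some f01 \<Longrightarrow> SBcAes s"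
  unfolding SBcAes_def
proof (coinduction arbitrary: s rule: always.coinduct)
  case (always s)
  then obtain p c f s' where s: "s = Node p c (Leaf f) s'" "G s'"
    using G_obt by blast
  have ab: "BcAes s" using BcAes_of[OF SPE_conv] always by blast
  have sp: "SPE s'" "PE s" using always(2) s unfolding SPE_def
    using always_inv[of PE p c "Leaf f" s'] by auto
  have ps': "payoff s' = Some f01"
  proof -
    from always(1) s have "(p = A \<and> f = f01) \<or> (p = B \<and> f = f10)" by (auto dest: G_node)
    moreover have "payoff s' = Some f01 \<or> payoff s' = Some f10"
      using conv_pay[OF SPE_conv[OF sp(1)] s(2)] .
    ultimately show ?thesis using always(3) s sp(2)
      by (cases c) (auto simp: PE_def)
  qed
  show ?case using s ab sp ps' by (auto intro: always_leaf BcAes_other)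
qed

theorem mainTheorem12:
  fixes s :: strat
  assumes "S0 s \<or> S1 s"
  shows "SAcBes s \<or> SBcAes s \<longleftrightarrow> SPE s"
proof -
  have g: "G s" using assms by (simp add: G_def)
  show ?thesis
  proof
    assume "SAcBes s \<or> SBcAes s"
    then show "SPE s" using A_to_SPE B_to_SPE g by blast
  next
    assume sp: "SPE s"
    show "SAcBes s \<or> SBcAes s"
      using conv_pay[OF SPE_conv[OF sp] g] SPE_A[OF g sp] SPE_B[OF g sp] by blast
  qed
qed

end
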